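(* Let $R$ be a generalized Krull domain and let $S$ be an overring of $R$ such that $R \subseteq S$ satisfies going-down. Let $\Delta$ be the set of height one primes $\mathfrak{p}$ of $R$ with $\mathfrak{p}S \neq S$. Then $S = \bigcap_{\mathfrak{p} \in \Delta} R_{\mathfrak{p}}$.
   Context: All rings are commutative with identity; an overring of a domain $R$ is a ring between $R$ and its fraction field. A ring extension $A \subseteq B$ satisfies going-down if whenever $\mathfrak{p} \subset \mathfrak{q}$ are primes of $A$ and $Q$ is a prime of $B$ with $Q \cap A = \mathfrak{q}$, there is a prime $P \subseteq Q$ of $B$ with $P \cap A = \mathfrak{p}$. A domain $R$ is a generalized Krull domain if (1) $R = \bigcap R_{\mathfrak{p}}$ over all height one primes $\mathfrak{p}$ of $R$, (2) every nonzero element of $R$ lies in only finitely many height one primes, and (3) $R_{\mathfrak{p}}$ is a valuation domain for every height one prime $\mathfrak{p}$. *)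

theory Defs
  imports Main
begin

text \<open>Domains are represented as subrings of an ambient field 'a (every domain
embeds in its fraction field). All notions are relative to the subring.\<close>

definition subring :: "'a::field set \<Rightarrow> bool" where
  "subring R \<longleftrightarrow> 0 \<in> R \<and> 1 \<in> R \<and>
     (\<forall>x\<in>R. \<forall>y\<in>R. x + y \<in> R \<and> x - y \<in> R \<and> x * y \<in> R)"

definition frac :: "'a::field set \<Rightarrow> 'a set" where
  "frac R = {a / b | a b. a \<in> R \<and> b \<in> R \<and> b \<noteq> 0}"

definition overring :: "'a::field set \<Rightarrow> 'a set \<Rightarrow> bool" where
  "overring R S \<longleftrightarrow> subring S \<and> R \<subseteq> S \<and> S \<subseteq> frac R"

definition prime_ideal :: "'a::field set \<Rightarrow> 'a set \<Rightarrow> bool" where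
  "prime_ideal R P \<longleftrightarrow> P \<subseteq> R \<and> 0 \<in> P \<and>
     (\<forall>x\<in>P. \<forall>y\<in>P. x + y \<in> P) \<and>
     (\<forall>r\<in>R. \<forall>x\<in>P. r * x \<in> P) \<and>
     P \<noteq> R \<and>
     (\<forall>a\<in>R. \<forall>b\<in>R. a * b \<in> P \<longrightarrow> a \<in> P \<or> b \<in> P)"

definition height_one :: "'a::field set \<Rightarrow> 'a set \<Rightarrow> bool" where
  "height_one R P \<longleftrightarrow> prime_ideal R P \<and> P \<noteq> {0} \<and>
     (\<forall>Q. prime_ideal R Q \<and> Q \<subseteq> P \<longrightarrow> Q = {0} \<or> Q = P)"

definition loc :: "'a::field set \<Rightarrow> 'a set \<Rightarrow> 'a set" where
  "loc R P = {a / b | a b. a \<in> R \<and> b \<in> R \<and> b \<notin> P}"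

definition valuation_domain :: "'a::field set \<Rightarrow> bool" where
  "valuation_domain V \<longleftrightarrow> subring V \<and>
     (\<forall>x\<in>frac V. x \<noteq> 0 \<longrightarrow> x \<in> V \<or> inverse x \<in> V)"

definition generalized_krull :: "'a::field set \<Rightarrow> bool" where
  "generalized_krull R \<longleftrightarrow> subring R \<and>
     R = {x \<in> frac R. \<forall>P. height_one R P \<longrightarrow> x \<in> loc R P} \<and>
     (\<forall>x\<in>R. x \<noteq> 0 \<longrightarrow> finite {P. height_one R P \<and> x \<in> P}) \<and>
     (\<forall>P. height_one R P \<longrightarrow> valuation_domain (loc R P))"

definition ext_ideal :: "'a::field set \<Rightarrow> 'a set \<Rightarrow> 'a set" where
  "ext_ideal P S = {\<Sum>i<(n::nat). p i * s i | n p s. \<forall>i<n. p i \<in> P \<and> s i \<in> S}"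

definition going_down :: "'a::field set \<Rightarrow> 'a set \<Rightarrow> bool" where
  "going_down A B \<longleftrightarrow> (\<forall>p q Q. prime_ideal A p \<and> prime_ideal A q \<and> p \<subset> q \<and>
       prime_ideal B Q \<and> Q \<inter> A = q \<longrightarrow>
       (\<exists>P. prime_ideal B P \<and> P \<subseteq> Q \<and> P \<inter> A = p))"

end

theory Submission
  imports Defs
begin

definition idl :: "'a::field set \<Rightarrow> 'a set \<Rightarrow> bool" where
  "idl S J \<longleftrightarrow> J \<subseteq> S \<and> 0 \<in> J \<and> (\<forall>x\<in>J. \<forall>y\<in>J. x + y \<in> J) \<and> (\<forall>r\<in>S. \<forall>x\<in>J. r * x \<in> J)"

lemma exists_prime:
  assumes S: "subring S" and I: "idl S I" and one: "1 \<notin> I"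
  shows "\<exists>Q. prime_ideal S Q \<and> I \<subseteq> Q"
proof -
  define A where "A = {J. idl S J \<and> I \<subseteq> J \<and> 1 \<notin> J}"
  have "\<exists>M\<in>A. \<forall>X\<in>A. M \<subseteq> X \<longrightarrow> X = M"
  proof (rule subset_Zorn_nonempty)
    show "A \<noteq> {}" using I one unfolding A_def by blast
  next
    fix C assume Cne: "C \<noteq> {}" and ch: "subset.chain A C"
    from ch have CA: "C \<subseteq> A" and cmp: "\<forall>X\<in>C. \<forall>Y\<in>C. X \<subseteq> Y \<or> Y \<subseteq> X"
      by (auto simp: subset_chain_def)
    have "idl S (\<Union>C)"
      unfolding idl_def
    proof (intro conjI ballI)
      show "\<Union>C \<subseteq> S" using CA by (auto simp: A_def idl_def)
      show "0 \<in> \<Union>C" using CA Cne by (auto simp: A_def idl_def)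
    next
      fix x y assume "x \<in> \<Union>C" "y \<in> \<Union>C"
      then obtain X Y where XY: "X \<in> C" "Y \<in> C" "x \<in> X" "y \<in> Y" by blast
      show "x + y \<in> \<Union>C"
      proof (cases "X \<subseteq> Y")
        case True
        have "idl S Y" using XY CA by (auto simp: A_def)
        hence "x + y \<in> Y" using XY True by (auto simp: idl_def)
        thus ?thesis using XY by blast
      next
        case False hence "Y \<subseteq> X" using cmp XY by blast
        have "idl S X" using XY CA by (auto simp: A_def)
        hence "x + y \<in> X" using XY \<open>Y \<subseteq> X\<close> by (auto simp: idl_def)
        thus ?thesis using XY by blast
      qed
    next
      fix r x assume "r \<in> S" "x \<in> \<Union>C"
      then obtain X where X: "X \<in> C" "x \<in> X" by blast
      have "idl S X" using X CA by (auto simp: A_def)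
      hence "r * x \<in> X" using X \<open>r \<in> S\<close> by (auto simp: idl_def)
      thus "r * x \<in> \<Union>C" using X by blast
    qed
    moreover have "I \<subseteq> \<Union>C" using CA Cne by (auto simp: A_def)
    moreover have "1 \<notin> \<Union>C" using CA by (auto simp: A_def)
    ultimately show "\<Union>C \<in> A" by (simp add: A_def)
  qed
  then obtain M where MA: "M \<in> A" and mx: "\<forall>X\<in>A. M \<subseteq> X \<longrightarrow> X = M" by blast
  have Mi: "idl S M" and IM: "I \<subseteq> M" and M1: "1 \<notin> M" using MA by (auto simp: A_def)
  have Sc: "\<And>x y. x \<in> S \<Longrightarrow> y \<in> S \<Longrightarrow> x + y \<in> S \<and> x * y \<in> S" using S by (simp add: subring_def)
  have S01: "0 \<in> S" "1 \<in> S" using S by (auto simp: subring_def)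
  have ext: "\<exists>m\<in>M. \<exists>s\<in>S. 1 = m + a * s" if a: "a \<in> S" "a \<notin> M" for a
  proof -
    define Ma where "Ma = {m + a * s | m s. m \<in> M \<and> s \<in> S}"
    have "idl S Ma" unfolding idl_def
    proof (intro conjI ballI)
      show "Ma \<subseteq> S" using Mi a Sc by (auto simp: Ma_def idl_def)
      show "0 \<in> Ma" unfolding Ma_def using Mi S01 by (auto simp: idl_def intro!: exI[of _ 0])
    next
      fix x y assume "x \<in> Ma" "y \<in> Ma"
      then obtain m s m' s' where "x = m + a * s" "y = m' + a * s'" "m \<in> M" "s \<in> S" "m' \<in> M" "s' \<in> S"
        by (auto simp: Ma_def)
      moreover have "x + y = (m + m') + a * (s + s')" using calculation by (simp add: algebra_simps)
      ultimately show "x + y \<in> Ma" using Mi Sc unfolding Ma_def idl_def by blast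
    next
      fix r x assume r: "r \<in> S" and "x \<in> Ma"
      then obtain m s where "x = m + a * s" "m \<in> M" "s \<in> S" by (auto simp: Ma_def)
      moreover have "r * x = r * m + a * (r * s)" using calculation by (simp add: algebra_simps)
      ultimately show "r * x \<in> Ma" using Mi Sc r unfolding Ma_def idl_def by blast
    qed
    moreover have "M \<subseteq> Ma"
    proof
      fix m assume "m \<in> M"
      moreover have "m = m + a * 0" by simp
      ultimately show "m \<in> Ma" unfolding Ma_def using S01 by blast
    qed
    moreover have "a \<in> Ma"
    proof -
      have "a = 0 + a * 1" by simp
      moreover have "0 \<in> M" using Mi by (simp add: idl_def)
      ultimately show ?thesis unfolding Ma_def using S01 by blast
    qed
    ultimately have "1 \<in> Ma" using mx IM a(2) unfolding A_def by auto
    thus ?thesis unfolding Ma_def by blast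
  qed
  have "prime_ideal S M" unfolding prime_ideal_def
  proof (intro conjI ballI impI)
    show "M \<subseteq> S" "0 \<in> M" using Mi by (auto simp: idl_def)
    show "M \<noteq> S" using M1 S01 by auto
  next
    fix x y assume "x \<in> M" "y \<in> M" thus "x + y \<in> M" using Mi by (auto simp: idl_def)
  next
    fix r x assume "r \<in> S" "x \<in> M" thus "r * x \<in> M" using Mi by (auto simp: idl_def)
  next
    fix a b assume ab: "a \<in> S" "b \<in> S" "a * b \<in> M"
    show "a \<in> M \<or> b \<in> M"
    proof (rule ccontr)
      assume "\<not> (a \<in> M \<or> b \<in> M)"
      then obtain m1 s1 m2 s2 where h: "m1 \<in> M" "s1 \<in> S" "1 = m1 + a * s1" "m2 \<in> M" "s2 \<in> S" "1 = m2 + b * s2"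
        using ext ab by meson
      have "1 = m1 + (a * s1) * (m2 + b * s2)" using h by simp
      also have "\<dots> = m1 + ((a * s1) * m2 + (s1 * s2) * (a * b))" by (simp add: algebra_simps)
      finally have eq: "1 = m1 + ((a * s1) * m2 + (s1 * s2) * (a * b))" .
      have "(a * s1) * m2 \<in> M" "(s1 * s2) * (a * b) \<in> M" using Mi h ab Sc by (auto simp: idl_def)
      hence "m1 + ((a * s1) * m2 + (s1 * s2) * (a * b)) \<in> M" using Mi h by (auto simp: idl_def)
      thus False using eq M1 by simp
    qed
  qed
  thus ?thesis using IM by blast
qed


lemma sub_closed:
  assumes "subring R" "x \<in> R" "y \<in> R"
  shows "x + y \<in> R" "x * y \<in> R" "x - y \<in> R" "0 \<in> R" "1 \<in> R"
  using assms by (auto simp: subring_def)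

lemma sub_one: "subring R \<Longrightarrow> 1 \<in> R" unfolding subring_def by blast
lemma sub_zero: "subring R \<Longrightarrow> 0 \<in> R" by (simp add: subring_def)

lemma sub_pow: "subring R \<Longrightarrow> x \<in> R \<Longrightarrow> x ^ n \<in> R"
  by (induction n) (auto simp: sub_closed sub_one)

lemma sub_prod: "finite F \<Longrightarrow> subring R \<Longrightarrow> (\<And>i. i \<in> F \<Longrightarrow> f i \<in> R) \<Longrightarrow> prod f F \<in> R"
  by (induction F rule: finite_induct) (auto simp: sub_closed sub_one)

lemma prime_one: "prime_ideal R P \<Longrightarrow> subring R \<Longrightarrow> 1 \<notin> P"
proof
  assume P: "prime_ideal R P" and R: "subring R" and "1 \<in> P"
  hence "R \<subseteq> P" unfolding prime_ideal_def by (metis mult.right_neutral subsetI)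
  thus False using P by (auto simp: prime_ideal_def)
qed

lemma prime_zero: "prime_ideal R P \<Longrightarrow> 0 \<in> P"
  by (simp add: prime_ideal_def)

lemma prime_mul: "prime_ideal R P \<Longrightarrow> a \<in> R \<Longrightarrow> b \<in> R \<Longrightarrow> a \<notin> P \<Longrightarrow> b \<notin> P \<Longrightarrow> a * b \<notin> P"
  by (auto simp: prime_ideal_def)

lemma prime_pow: "prime_ideal R P \<Longrightarrow> subring R \<Longrightarrow> y \<in> R \<Longrightarrow> y \<notin> P \<Longrightarrow> y ^ n \<notin> P"
proof (induction n)
  case 0 thus ?case using prime_one by auto
next
  case (Suc n) thus ?case using prime_mul[of R P y "y^n"] sub_pow by auto
qed

lemma prime_prod: "finite F \<Longrightarrow> prime_ideal R P \<Longrightarrow> subring R \<Longrightarrow> (\<And>i. i \<in> F \<Longrightarrow> f i \<in> R \<and> f i \<notin> P) \<Longrightarrow> prod f F \<notin> P"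
proof (induction F rule: finite_induct)
  case empty thus ?case using prime_one by auto
next
  case (insert x F) thus ?case using prime_mul[of R P "f x" "prod f F"] sub_prod[of F R f] by auto
qed

lemma locI: "a \<in> R \<Longrightarrow> b \<in> R \<Longrightarrow> b \<notin> P \<Longrightarrow> a / b \<in> loc R P"
  unfolding loc_def by blast

lemma locE: "y \<in> loc R P \<Longrightarrow> (\<And>a b. a \<in> R \<Longrightarrow> b \<in> R \<Longrightarrow> b \<notin> P \<Longrightarrow> y = a / b \<Longrightarrow> thesis) \<Longrightarrow> thesis"
  unfolding loc_def by blast

lemma loc_R: "subring R \<Longrightarrow> prime_ideal R P \<Longrightarrow> r \<in> R \<Longrightarrow> r \<in> loc R P"
  using locI[of r R 1 P] prime_one[of R P] sub_closed(5)[of R r r] by simp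

lemma loc_mult:
  assumes R: "subring R" and P: "prime_ideal R P" and y: "y \<in> loc R P" and z: "z \<in> loc R P"
  shows "y * z \<in> loc R P"
proof -
  obtain a b where ab: "a \<in> R" "b \<in> R" "b \<notin> P" "y = a / b" using y by (rule locE)
  obtain c d where cd: "c \<in> R" "d \<in> R" "d \<notin> P" "z = c / d" using z by (rule locE)
  have "y * z = (a * c) / (b * d)" using ab cd by simp
  moreover have "b * d \<notin> P" using prime_mul[OF P] ab cd by blast
  ultimately show ?thesis using locI[of "a*c" R "b*d" P] ab cd R by (simp add: sub_closed)
qed

lemma loc_add:
  assumes R: "subring R" and P: "prime_ideal R P" and y: "y \<in> loc R P" and z: "z \<in> loc R P"
  shows "y + z \<in> loc R P"
proof -
  obtain a b where ab: "a \<in> R" "b \<in> R" "b \<notin> P" "y = a / b" using y by (rule locE)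
  obtain c d where cd: "c \<in> R" "d \<in> R" "d \<notin> P" "z = c / d" using z by (rule locE)
  have "b \<noteq> 0" "d \<noteq> 0" using ab cd prime_zero[OF P] by auto
  hence "y + z = (a * d + c * b) / (b * d)" using ab cd by (simp add: add_frac_eq)
  moreover have "b * d \<notin> P" using prime_mul[OF P] ab cd by blast
  ultimately show ?thesis using locI[of "a*d + c*b" R "b*d" P] ab cd R by (simp add: sub_closed)
qed

lemma loc_pow: "subring R \<Longrightarrow> prime_ideal R P \<Longrightarrow> y \<in> loc R P \<Longrightarrow> y ^ n \<in> loc R P"
  by (induction n) (auto intro: loc_mult loc_R sub_one)

lemma loc_inv_not:
  assumes R: "subring R" and P: "prime_ideal R P" and e: "e \<in> P" "e \<noteq> 0"
  shows "1 / e \<notin> loc R P"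
proof
  assume "1 / e \<in> loc R P"
  then obtain g h where gh: "g \<in> R" "h \<in> R" "h \<notin> P" "1 / e = g / h" by (rule locE)
  have "h \<noteq> 0" using gh prime_zero[OF P] by auto
  hence "h = e * g" using gh e by (simp add: field_simps)
  moreover have "e * g \<in> P" using P e gh by (auto simp: prime_ideal_def mult.commute)
  ultimately show False using gh by simp
qed

lemma gk_sub: "generalized_krull R \<Longrightarrow> subring R"
  by (simp add: generalized_krull_def)

lemma ht1_prime: "height_one R P \<Longrightarrow> prime_ideal R P"
  by (simp add: height_one_def)

lemma val_RR:
  assumes gk: "generalized_krull R" and P: "height_one R P" and y: "y \<in> R" "y \<noteq> 0" and z: "z \<in> R" "z \<noteq> 0"
  shows "y / z \<in> loc R P \<or> z / y \<in> loc R P"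
proof -
  have R: "subring R" using gk by (rule gk_sub)
  have Pp: "prime_ideal R P" using P by (rule ht1_prime)
  have V: "valuation_domain (loc R P)" using gk P by (simp add: generalized_krull_def)
  have "y / z \<in> frac (loc R P)" unfolding frac_def using loc_R[OF R Pp] y z by blast
  moreover have "y / z \<noteq> 0" using y z by simp
  ultimately have "y / z \<in> loc R P \<or> inverse (y / z) \<in> loc R P" using V unfolding valuation_domain_def by blast
  thus ?thesis by simp
qed

lemma not_loc:
  assumes gk: "generalized_krull R" and P: "height_one R P" and x: "x \<in> frac R" and nx: "x \<notin> loc R P"
  shows "\<exists>e f. e \<in> R \<and> f \<in> R \<and> f \<notin> P \<and> e \<in> P \<and> e \<noteq> 0 \<and> x = f / e"
proof -
  have R: "subring R" using gk by (rule gk_sub)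
  have Pp: "prime_ideal R P" using P by (rule ht1_prime)
  obtain a b where ab: "a \<in> R" "b \<in> R" "b \<noteq> 0" "x = a / b" using x by (auto simp: frac_def)
  have "x \<noteq> 0" using nx loc_R[OF R Pp, of 0] sub_closed(4)[OF R ab(1) ab(1)] by auto
  hence a0: "a \<noteq> 0" using ab by simp
  have "b / a \<in> loc R P" using val_RR[OF gk P ab(1) a0 ab(2) ab(3)] nx ab by auto
  then obtain e f where ef: "e \<in> R" "f \<in> R" "f \<notin> P" "b / a = e / f" by (rule locE)
  have f0: "f \<noteq> 0" using ef prime_zero[OF Pp] by auto
  have e0: "e \<noteq> 0" using ef a0 ab f0 by (auto simp: field_simps)
  have "x = inverse (b / a)" using ab by simp
  also have "\<dots> = inverse (e / f)" using ef by simp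
  also have "\<dots> = f / e" by simp
  finally have xfe: "x = f / e" .
  have "e \<in> P" using locI[of f R e P] ef xfe nx by blast
  thus ?thesis using ef e0 xfe by blast
qed


lemma arch:
  assumes gk: "generalized_krull R" and P: "height_one R P" and e: "e \<in> P" "e \<noteq> 0" and s: "s \<in> P"
  shows "\<exists>n. s ^ n / e \<in> loc R P"
proof -
  have R: "subring R" using gk by (rule gk_sub)
  have Pp: "prime_ideal R P" using P by (rule ht1_prime)
  have PR: "P \<subseteq> R" using Pp by (simp add: prime_ideal_def)
  let ?V = "loc R P"
  have VR: "\<And>r. r \<in> R \<Longrightarrow> r \<in> ?V" using loc_R[OF R Pp] .
  have Vm: "\<And>y z. y \<in> ?V \<Longrightarrow> z \<in> ?V \<Longrightarrow> y * z \<in> ?V" using loc_mult[OF R Pp] .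
  have Va: "\<And>y z. y \<in> ?V \<Longrightarrow> z \<in> ?V \<Longrightarrow> y + z \<in> ?V" using loc_add[OF R Pp] .
  have Vp: "\<And>y n. y \<in> ?V \<Longrightarrow> y ^ n \<in> ?V" using loc_pow[OF R Pp] .
  have eR: "e \<in> R" using e PR by auto
  have ne: "1 / e \<notin> ?V" using loc_inv_not[OF R Pp e] .
  define rad where "rad = {y \<in> R. \<exists>n. y ^ n / e \<in> ?V}"
  have rad0: "0 \<in> rad" unfolding rad_def using sub_zero[OF R] VR[OF sub_zero[OF R]]
    by (auto intro!: exI[of _ "1::nat"])
  have radP: "prime_ideal R rad" unfolding prime_ideal_def
  proof (intro conjI ballI impI)
    show "rad \<subseteq> R" by (auto simp: rad_def)
    show "0 \<in> rad" by (rule rad0)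
    show "rad \<noteq> R"
    proof
      assume "rad = R"
      hence "1 \<in> rad" using sub_one[OF R] by simp
      thus False using ne by (auto simp: rad_def)
    qed
  next
    fix y z assume y: "y \<in> rad" and z: "z \<in> rad"
    then obtain n m where yR: "y \<in> R" and zR: "z \<in> R" and yn: "y ^ n / e \<in> ?V" and zm: "z ^ m / e \<in> ?V"
      by (auto simp: rad_def)
    have yzR: "y + z \<in> R" using yR zR R by (simp add: sub_closed)
    show "y + z \<in> rad"
    proof (cases "y = 0 \<or> z = 0")
      case True thus ?thesis using y z by auto
    next
      case False
      hence y0: "y \<noteq> 0" and z0: "z \<noteq> 0" by auto
      from val_RR[OF gk P yR y0 zR z0]
      show ?thesis
      proof
        assume yz: "y / z \<in> ?V"
        have "(y + z) ^ m / e = (z ^ m / e) * (1 + y / z) ^ m"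
        proof -
          have "y + z = z * (1 + y / z)" using z0 by (simp add: field_simps)
          hence "(y + z) ^ m = z ^ m * (1 + y / z) ^ m" by (simp add: power_mult_distrib)
          thus ?thesis by simp
        qed
        moreover have "(z ^ m / e) * (1 + y / z) ^ m \<in> ?V"
          using Vm[OF zm Vp[OF Va[OF VR[OF sub_one[OF R]] yz]]] .
        ultimately have "(y + z) ^ m / e \<in> ?V" by (simp only:)
        thus ?thesis using yzR unfolding rad_def by blast
      next
        assume yz: "z / y \<in> ?V"
        have "(y + z) ^ n / e = (y ^ n / e) * (1 + z / y) ^ n"
        proof -
          have "y + z = y * (1 + z / y)" using y0 by (simp add: field_simps)
          hence "(y + z) ^ n = y ^ n * (1 + z / y) ^ n" by (simp add: power_mult_distrib)
          thus ?thesis by simp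
        qed
        moreover have "(y ^ n / e) * (1 + z / y) ^ n \<in> ?V"
          using Vm[OF yn Vp[OF Va[OF VR[OF sub_one[OF R]] yz]]] .
        ultimately have "(y + z) ^ n / e \<in> ?V" by (simp only:)
        thus ?thesis using yzR unfolding rad_def by blast
      qed
    qed
  next
    fix r y assume r: "r \<in> R" and y: "y \<in> rad"
    then obtain n where yR: "y \<in> R" and yn: "y ^ n / e \<in> ?V" by (auto simp: rad_def)
    have "(r * y) ^ n / e = r ^ n * (y ^ n / e)" by (simp add: power_mult_distrib)
    moreover have "r ^ n * (y ^ n / e) \<in> ?V" using Vm[OF VR[OF sub_pow[OF R r]] yn] .
    moreover have "r * y \<in> R" using r yR R by (simp add: sub_closed)
    ultimately have "(r * y) ^ n / e \<in> ?V" "r * y \<in> R" by (simp only:)+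
    thus "r * y \<in> rad" unfolding rad_def by blast
  next
    fix a b assume a: "a \<in> R" and b: "b \<in> R" and ab: "a * b \<in> rad"
    then obtain n where abn: "(a * b) ^ n / e \<in> ?V" by (auto simp: rad_def)
    show "a \<in> rad \<or> b \<in> rad"
    proof (cases "a = 0 \<or> b = 0")
      case True thus ?thesis using rad0 by auto
    next
      case False
      hence a0: "a \<noteq> 0" and b0: "b \<noteq> 0" by auto
      from val_RR[OF gk P a a0 b b0] show ?thesis
      proof
        assume q: "a / b \<in> ?V"
        have "a ^ (2 * n) / e = (a / b) ^ n * ((a * b) ^ n / e)"
          using b0 by (simp add: power_mult_distrib power_mult field_simps power2_eq_square)
        moreover have "(a / b) ^ n * ((a * b) ^ n / e) \<in> ?V" using Vm[OF Vp[OF q] abn] .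
        ultimately have "a ^ (2 * n) / e \<in> ?V" by (simp only:)
        thus ?thesis using a by (auto simp: rad_def)
      next
        assume q: "b / a \<in> ?V"
        have "b ^ (2 * n) / e = (b / a) ^ n * ((a * b) ^ n / e)"
          using a0 by (simp add: power_mult_distrib power_mult field_simps power2_eq_square)
        moreover have "(b / a) ^ n * ((a * b) ^ n / e) \<in> ?V" using Vm[OF Vp[OF q] abn] .
        ultimately have "b ^ (2 * n) / e \<in> ?V" by (simp only:)
        thus ?thesis using b by (auto simp: rad_def)
      qed
    qed
  qed
  have "rad \<subseteq> P"
  proof
    fix y assume y: "y \<in> rad"
    then obtain n where yR: "y \<in> R" and yn: "y ^ n / e \<in> ?V" by (auto simp: rad_def)
    show "y \<in> P"
    proof (rule ccontr)
      assume "y \<notin> P"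
      hence ynP: "y ^ n \<notin> P" using prime_pow[OF Pp R yR] by blast
      hence y0: "y ^ n \<noteq> 0" using prime_zero[OF Pp] by metis
      have "1 / y ^ n \<in> ?V" using locI[OF sub_one[OF R] sub_pow[OF R yR] ynP] .
      hence "(1 / y ^ n) * (y ^ n / e) \<in> ?V" using Vm yn by blast
      moreover have "(1 / y ^ n) * (y ^ n / e) = 1 / e" using y0 e by (simp add: field_simps)
      ultimately have "1 / e \<in> ?V" by (simp only:)
      thus False using ne by simp
    qed
  qed
  moreover have "rad \<noteq> {0}"
  proof -
    have "e \<in> rad" unfolding rad_def using eR e VR[OF sub_one[OF R]] by (auto intro!: exI[of _ "1::nat"])
    thus ?thesis using e by auto
  qed
  ultimately have "rad = P" using P radP unfolding height_one_def by blast
  hence "s \<in> rad" using s by simp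
  thus ?thesis by (auto simp: rad_def)
qed


lemma frac_mult_R: "subring R \<Longrightarrow> x \<in> frac R \<Longrightarrow> d \<in> R \<Longrightarrow> d * x \<in> frac R"
proof -
  assume R: "subring R" and x: "x \<in> frac R" and d: "d \<in> R"
  then obtain a b where ab: "a \<in> R" "b \<in> R" "b \<noteq> 0" "x = a / b" by (auto simp: frac_def)
  have "d * x = (d * a) / b" using ab by simp
  moreover have "d * a \<in> R" using R d ab by (simp add: sub_closed)
  ultimately show ?thesis using ab unfolding frac_def by blast
qed

lemma key:
  assumes gk: "generalized_krull R" and q: "prime_ideal R q" and x: "x \<in> frac R"
    and hyp: "\<And>P. height_one R P \<Longrightarrow> P \<subseteq> q \<Longrightarrow> x \<in> loc R P"
  shows "x \<in> loc R q"
proof -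
  have R: "subring R" using gk by (rule gk_sub)
  obtain a b where ab: "a \<in> R" "b \<in> R" "b \<noteq> 0" "x = a / b" using x by (auto simp: frac_def)
  define F where "F = {P. height_one R P \<and> x \<notin> loc R P}"
  have "F \<subseteq> {P. height_one R P \<and> b \<in> P}"
  proof
    fix P assume "P \<in> F"
    hence P: "height_one R P" "x \<notin> loc R P" by (auto simp: F_def)
    have "b \<in> P"
    proof (rule ccontr)
      assume "b \<notin> P"
      hence "x \<in> loc R P" using locI[OF ab(1,2)] ab(4) by blast
      thus False using P by simp
    qed
    thus "P \<in> {P. height_one R P \<and> b \<in> P}" using P by simp
  qed
  moreover have "finite {P. height_one R P \<and> b \<in> P}" using gk ab by (simp add: generalized_krull_def)
  ultimately have finF: "finite F" by (rule finite_subset)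
  have ex: "\<exists>t. t \<in> R \<and> t \<notin> q \<and> t * x \<in> loc R P" if PF: "P \<in> F" for P
  proof -
    have P: "height_one R P" and nx: "x \<notin> loc R P" using PF by (auto simp: F_def)
    have Pp: "prime_ideal R P" using P by (rule ht1_prime)
    have "\<not> P \<subseteq> q" using hyp P nx by blast
    then obtain s where s: "s \<in> P" "s \<notin> q" by blast
    have sR: "s \<in> R" using s Pp by (auto simp: prime_ideal_def)
    obtain e f where ef: "e \<in> R" "f \<in> R" "f \<notin> P" "e \<in> P" "e \<noteq> 0" "x = f / e"
      using not_loc[OF gk P x nx] by blast
    obtain n where n: "s ^ n / e \<in> loc R P" using arch[OF gk P ef(4,5) s(1)] by blast
    have "s ^ n * x = (s ^ n / e) * f" using ef by simp
    moreover have "(s ^ n / e) * f \<in> loc R P" using loc_mult[OF R Pp n loc_R[OF R Pp ef(2)]] .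
    ultimately have "s ^ n * x \<in> loc R P" by simp
    moreover have "s ^ n \<notin> q" using prime_pow[OF q R sR s(2)] .
    ultimately show ?thesis using sub_pow[OF R sR] by blast
  qed
  obtain t where t: "\<And>P. P \<in> F \<Longrightarrow> t P \<in> R \<and> t P \<notin> q \<and> t P * x \<in> loc R P"
    using ex by metis
  define d where "d = prod t F"
  have dR: "d \<in> R" unfolding d_def using sub_prod[OF finF R] t by blast
  have dq: "d \<notin> q" unfolding d_def using prime_prod[OF finF q R] t by blast
  have d0: "d \<noteq> 0" using dq prime_zero[OF q] by auto
  have "d * x \<in> loc R P" if P: "height_one R P" for P
  proof -
    have Pp: "prime_ideal R P" using P by (rule ht1_prime)
    show ?thesis
    proof (cases "P \<in> F")
      case True
      have "d = t P * prod t (F - {P})" unfolding d_def using finF True by (simp add: prod.remove)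
      hence "d * x = (t P * x) * prod t (F - {P})" by simp
      moreover have "prod t (F - {P}) \<in> R" using sub_prod[of "F - {P}" R t] finF R t by blast
      ultimately show ?thesis using loc_mult[OF R Pp] loc_R[OF R Pp] t[OF True] by metis
    next
      case False
      hence "x \<in> loc R P" using P by (auto simp: F_def)
      thus ?thesis using loc_mult[OF R Pp] loc_R[OF R Pp dR] by blast
    qed
  qed
  moreover have "d * x \<in> frac R" using frac_mult_R[OF R x dR] .
  ultimately have "d * x \<in> R" using gk unfolding generalized_krull_def by blast
  moreover have "x = (d * x) / d" using d0 by simp
  ultimately show ?thesis using locI[of "d * x" R d q] dR dq by simp
qed


lemma sum_split_nat: "(\<Sum>i<(n::nat) + m. g i) = (\<Sum>i<n. g i) + (\<Sum>i<m. g (n + i))"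
  by (induction m) (auto simp: add.assoc)

lemma ext_memI:
  fixes p s :: "nat \<Rightarrow> 'a::field"
  assumes "y = (\<Sum>i<n. p i * s i)" "\<forall>i<n. p i \<in> P \<and> s i \<in> S"
  shows "y \<in> ext_ideal P S"
  unfolding ext_ideal_def using assms by blast

lemma ext_memE:
  assumes "y \<in> ext_ideal P S"
  obtains n :: nat and p s where "y = (\<Sum>i<n. p i * s i)" "\<forall>i<n. p i \<in> P \<and> s i \<in> S"
  using assms unfolding ext_ideal_def by blast

lemma ext_sub:
  assumes Q: "prime_ideal S Q" and PQ: "P \<subseteq> Q"
  shows "ext_ideal P S \<subseteq> Q"
proof
  fix y assume "y \<in> ext_ideal P S"
  then obtain n :: nat and p s where y: "y = (\<Sum>i<n. p i * s i)" and ps: "\<forall>i<n. p i \<in> P \<and> s i \<in> S"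
    by (rule ext_memE)
  have "(\<Sum>i<k. p i * s i) \<in> Q" if "k \<le> n" for k
    using that
  proof (induction k)
    case 0 thus ?case using Q by (simp add: prime_ideal_def)
  next
    case (Suc k)
    have "p k \<in> Q" "s k \<in> S" using ps PQ Suc.prems by auto
    hence "s k * p k \<in> Q" using Q by (simp add: prime_ideal_def)
    moreover have "(\<Sum>i<k. p i * s i) \<in> Q" using Suc by simp
    ultimately show ?case using Q by (simp add: prime_ideal_def mult.commute)
  qed
  thus "y \<in> Q" using y by simp
qed

lemma ext_idl:
  assumes S: "subring S" and PS: "P \<subseteq> S" and P0: "0 \<in> P"
  shows "idl S (ext_ideal P S)" "P \<subseteq> ext_ideal P S"
proof -
  show "P \<subseteq> ext_ideal P S"
  proof
    fix p assume p: "p \<in> P"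
    have "p = (\<Sum>i<(1::nat). (\<lambda>_. p) i * (\<lambda>_. 1) i)" by simp
    moreover have "\<forall>i<(1::nat). (\<lambda>_. p) i \<in> P \<and> (\<lambda>_. 1) i \<in> S" using p sub_one[OF S] by simp
    ultimately show "p \<in> ext_ideal P S" by (rule ext_memI)
  qed
  show "idl S (ext_ideal P S)" unfolding idl_def
  proof (intro conjI ballI)
    show "ext_ideal P S \<subseteq> S"
    proof
      fix y assume "y \<in> ext_ideal P S"
      then obtain n :: nat and p s where y: "y = (\<Sum>i<n. p i * s i)" and ps: "\<forall>i<n. p i \<in> P \<and> s i \<in> S"
        by (rule ext_memE)
      have "(\<Sum>i<k. p i * s i) \<in> S" if "k \<le> n" for k
        using that
      proof (induction k)
        case 0 thus ?case using sub_zero[OF S] by simp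
      next
        case (Suc k)
        have "p k \<in> S" "s k \<in> S" using ps PS Suc.prems by auto
        thus ?case using Suc S by (simp add: sub_closed)
      qed
      thus "y \<in> S" using y by simp
    qed
    have "0 = (\<Sum>i<(0::nat). (\<lambda>_. 0) i * (\<lambda>_. 0) i)" by simp
    thus "0 \<in> ext_ideal P S" by (rule ext_memI) simp
  next
    fix x y assume xe: "x \<in> ext_ideal P S" and ye: "y \<in> ext_ideal P S"
    obtain n :: nat and p s where x: "x = (\<Sum>i<n. p i * s i)" and ps: "\<forall>i<n. p i \<in> P \<and> s i \<in> S"
      using xe by (rule ext_memE)
    obtain m :: nat and p' s' where y: "y = (\<Sum>i<m. p' i * s' i)" and ps': "\<forall>i<m. p' i \<in> P \<and> s' i \<in> S"
      using ye by (rule ext_memE)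
    define P2 where "P2 = (\<lambda>i. if i < n then p i else p' (i - n))"
    define S2 where "S2 = (\<lambda>i. if i < n then s i else s' (i - n))"
    have "(\<Sum>i<n + m. P2 i * S2 i) = (\<Sum>i<n. P2 i * S2 i) + (\<Sum>i<m. P2 (n + i) * S2 (n + i))"
      by (rule sum_split_nat)
    also have "\<dots> = x + y"
    proof -
      have "(\<Sum>i<n. P2 i * S2 i) = x" unfolding x P2_def S2_def by (rule sum.cong) auto
      moreover have "(\<Sum>i<m. P2 (n + i) * S2 (n + i)) = y" unfolding y P2_def S2_def by simp
      ultimately show ?thesis by simp
    qed
    finally have eq: "x + y = (\<Sum>i<n + m. P2 i * S2 i)" by simp
    have "\<forall>i<n + m. P2 i \<in> P \<and> S2 i \<in> S" using ps ps' unfolding P2_def S2_def by auto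
    thus "x + y \<in> ext_ideal P S" by (rule ext_memI[OF eq])
  next
    fix r x assume r: "r \<in> S" and xe: "x \<in> ext_ideal P S"
    from xe obtain n :: nat and p s where x: "x = (\<Sum>i<n. p i * s i)" and ps: "\<forall>i<n. p i \<in> P \<and> s i \<in> S"
      by (rule ext_memE)
    have "r * x = (\<Sum>i<n. p i * (\<lambda>i. r * s i) i)" unfolding x by (simp add: sum_distrib_left algebra_simps)
    moreover have "\<forall>i<n. p i \<in> P \<and> (\<lambda>i. r * s i) i \<in> S" using ps r S by (simp add: sub_closed)
    ultimately show "r * x \<in> ext_ideal P S" by (rule ext_memI)
  qed
qed


lemma contract_prime:
  assumes Q: "prime_ideal S Q" and RS: "R \<subseteq> S" and R: "subring R"
  shows "prime_ideal R (Q \<inter> R)"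
  unfolding prime_ideal_def
proof (intro conjI ballI impI)
  show "Q \<inter> R \<subseteq> R" by blast
  show "0 \<in> Q \<inter> R" using Q sub_zero[OF R] by (simp add: prime_ideal_def)
  show "Q \<inter> R \<noteq> R"
  proof
    assume "Q \<inter> R = R"
    hence "1 \<in> Q" using sub_one[OF R] by blast
    hence "S \<subseteq> Q" using Q unfolding prime_ideal_def by (metis mult.right_neutral subsetI)
    thus False using Q by (auto simp: prime_ideal_def)
  qed
next
  fix x y assume "x \<in> Q \<inter> R" "y \<in> Q \<inter> R"
  thus "x + y \<in> Q \<inter> R" using Q R by (auto simp: prime_ideal_def sub_closed)
next
  fix r x assume "r \<in> R" "x \<in> Q \<inter> R"
  thus "r * x \<in> Q \<inter> R" using Q R RS by (auto simp: prime_ideal_def sub_closed)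
next
  fix a b assume "a \<in> R" "b \<in> R" "a * b \<in> Q \<inter> R"
  have "\<forall>a\<in>S. \<forall>b\<in>S. a * b \<in> Q \<longrightarrow> a \<in> Q \<or> b \<in> Q" using Q by (simp add: prime_ideal_def)
  hence "a \<in> Q \<or> b \<in> Q" using \<open>a \<in> R\<close> \<open>b \<in> R\<close> \<open>a * b \<in> Q \<inter> R\<close> RS by blast
  thus "a \<in> Q \<inter> R \<or> b \<in> Q \<inter> R" using \<open>a \<in> R\<close> \<open>b \<in> R\<close> by blast
qed

lemma gd_prime:
  assumes gd: "going_down R S" and p: "prime_ideal R p" and Q: "prime_ideal S Q"
    and pQ: "p \<subseteq> Q" and RS: "R \<subseteq> S" and R: "subring R"
  shows "\<exists>P'. prime_ideal S P' \<and> P' \<inter> R = p"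
proof -
  have q: "prime_ideal R (Q \<inter> R)" using contract_prime[OF Q RS R] .
  have pR: "p \<subseteq> R" using p by (simp add: prime_ideal_def)
  show ?thesis
  proof (cases "p = Q \<inter> R")
    case True thus ?thesis using Q by blast
  next
    case False
    hence "p \<subset> Q \<inter> R" using pQ pR by blast
    thus ?thesis using gd p q Q unfolding going_down_def by blast
  qed
qed

theorem proposition6p3:
  fixes R S :: "'a::field set"
  assumes "generalized_krull R"
    and "overring R S"
    and "going_down R S"
  shows "S = {x \<in> frac R. \<forall>P. height_one R P \<and> ext_ideal P S \<noteq> S \<longrightarrow> x \<in> loc R P}"
proof -
  note gk = assms(1) and gd = assms(3)
  have R: "subring R" using gk by (rule gk_sub)
  have S: "subring S" and RS: "R \<subseteq> S" and SF: "S \<subseteq> frac R" using assms(2) by (auto simp: overring_def)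
  show ?thesis
  proof (intro equalityI subsetI)
    fix x assume xS: "x \<in> S"
    have "x \<in> loc R P" if P: "height_one R P" and ne: "ext_ideal P S \<noteq> S" for P
    proof -
      have Pp: "prime_ideal R P" using P by (rule ht1_prime)
      have PR: "P \<subseteq> R" using Pp by (simp add: prime_ideal_def)
      have PS: "P \<subseteq> S" using PR RS by blast
      note E = ext_idl[OF S PS prime_zero[OF Pp]]
      have one: "1 \<notin> ext_ideal P S"
      proof
        assume o: "1 \<in> ext_ideal P S"
        have "S \<subseteq> ext_ideal P S"
        proof
          fix s assume "s \<in> S"
          hence "s * 1 \<in> ext_ideal P S" using E(1) o unfolding idl_def by blast
          thus "s \<in> ext_ideal P S" by simp
        qed
        moreover have "ext_ideal P S \<subseteq> S" using E(1) by (simp add: idl_def)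
        ultimately show False using ne by blast
      qed
      obtain Q where Q: "prime_ideal S Q" "ext_ideal P S \<subseteq> Q" using exists_prime[OF S E(1) one] by blast
      have "P \<subseteq> Q" using Q E(2) by blast
      then obtain P' where P': "prime_ideal S P'" "P' \<inter> R = P" using gd_prime[OF gd Pp Q(1) _ RS R] by blast
      show ?thesis
      proof (rule ccontr)
        assume nx: "x \<notin> loc R P"
        obtain e f where ef: "e \<in> R" "f \<in> R" "f \<notin> P" "e \<in> P" "e \<noteq> 0" "x = f / e"
          using not_loc[OF gk P _ nx] xS SF by blast
        have "f = x * e" using ef by simp
        moreover have "x * e \<in> P'"
        proof -
          have "\<forall>r\<in>S. \<forall>y\<in>P'. r * y \<in> P'" using P'(1) by (simp add: prime_ideal_def)
          moreover have "e \<in> P'" using P'(2) ef(4) by blast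
          ultimately show ?thesis using xS by blast
        qed
        ultimately have "f \<in> P' \<inter> R" using ef by simp
        thus False using P' ef by simp
      qed
    qed
    thus "x \<in> {x \<in> frac R. \<forall>P. height_one R P \<and> ext_ideal P S \<noteq> S \<longrightarrow> x \<in> loc R P}"
      using xS SF by blast
  next
    fix x assume "x \<in> {x \<in> frac R. \<forall>P. height_one R P \<and> ext_ideal P S \<noteq> S \<longrightarrow> x \<in> loc R P}"
    hence xF: "x \<in> frac R" and hyp: "\<And>P. height_one R P \<Longrightarrow> ext_ideal P S \<noteq> S \<Longrightarrow> x \<in> loc R P" by auto
    show "x \<in> S"
    proof (rule ccontr)
      assume nS: "x \<notin> S"
      define I where "I = {s \<in> S. s * x \<in> S}"
      have Ii: "idl S I" unfolding idl_def
      proof (intro conjI ballI)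
        show "I \<subseteq> S" by (auto simp: I_def)
        show "0 \<in> I" using sub_zero[OF S] by (simp add: I_def)
      next
        fix a b assume "a \<in> I" "b \<in> I"
        thus "a + b \<in> I" using S by (auto simp: I_def sub_closed distrib_right)
      next
        fix r a assume r: "r \<in> S" and a: "a \<in> I"
        hence "r * (a * x) \<in> S" "r * a \<in> S" using S by (auto simp: I_def sub_closed)
        thus "r * a \<in> I" by (simp add: I_def mult.assoc)
      qed
      have I1: "1 \<notin> I" using nS by (simp add: I_def)
      obtain Q where Q: "prime_ideal S Q" "I \<subseteq> Q" using exists_prime[OF S Ii I1] by blast
      have q: "prime_ideal R (Q \<inter> R)" using contract_prime[OF Q(1) RS R] .
      have "x \<in> loc R (Q \<inter> R)"
      proof (rule key[OF gk q xF])
        fix P assume P: "height_one R P" and Pq: "P \<subseteq> Q \<inter> R"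
        have Pp: "prime_ideal R P" using P by (rule ht1_prime)
        obtain P' where P': "prime_ideal S P'" "P' \<inter> R = P" using gd_prime[OF gd Pp Q(1) _ RS R] Pq by blast
        have "ext_ideal P S \<subseteq> P'" using ext_sub[OF P'(1)] P' by blast
        moreover have "P' \<noteq> S" "P' \<subseteq> S" using P'(1) by (auto simp: prime_ideal_def)
        ultimately have "ext_ideal P S \<noteq> S" by blast
        thus "x \<in> loc R P" using hyp P by blast
      qed
      then obtain c d where cd: "c \<in> R" "d \<in> R" "d \<notin> Q \<inter> R" "x = c / d" by (rule locE)
      have "d \<noteq> 0" using cd prime_zero[OF q] by auto
      hence "d * x = c" using cd by simp
      hence "d \<in> I" using cd RS by (auto simp: I_def)
      thus False using Q cd by blast
    qed
  qed
qed

end
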